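(* Let $G$ be a sub-$2$-permutable graph. Then $\chi_i(G\,\square\,K_2)=\Delta(G\,\square\,K_2)+1$.
   Context: All graphs are finite and simple. $K^-_{2n}$ is the complete graph on $2n$ vertices with a perfect matching removed. A homomorphism $f:G\to H$ is a map $V(G)\to V(H)$ with $f(u)f(v)\in E(H)$ whenever $uv\in E(G)$; it is locally injective if for every vertex $v$, $f$ is injective on $N(v)$. A graph $G$ (not necessarily regular) is sub-$2$-permutable if it admits a locally injective homomorphism to $K^-_{\Delta(G)+2}$ (in particular $\Delta(G)$ is even). An incidence of $G$ is a pair $(v,e)$ with $v\in e\in E(G)$; incidences $(v,e),(u,f)$ are adjacent if $v=u$, or $e=f$, or $vu\in\{e,f\}$; an incidence coloring gives adjacent incidences distinct colors; $\chi_i(G)$ is the least number of colors of an incidence coloring. $\Delta$ denotes maximum degree. $G\,\square\,H$ is the Cartesian product: vertex set $V(G)\times V(H)$, $(u,v)\sim(u',v')$ iff ($uu'\in E(G)$, $v=v'$) or ($u=u'$, $vv'\in E(H)$). *)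

theory Defs
  imports Main
begin

definition simple_graph :: "'a set \<Rightarrow> 'a set set \<Rightarrow> bool" where
  "simple_graph V E \<longleftrightarrow> finite V \<and>
     (\<forall>e\<in>E. \<exists>u v. e = {u, v} \<and> u \<noteq> v \<and> u \<in> V \<and> v \<in> V)"

definition neighbors :: "'a set set \<Rightarrow> 'a \<Rightarrow> 'a set" where
  "neighbors E v = {u. {u, v} \<in> E}"

definition degree :: "'a set set \<Rightarrow> 'a \<Rightarrow> nat" where
  "degree E v = card {e \<in> E. v \<in> e}"

definition max_degree :: "'a set \<Rightarrow> 'a set set \<Rightarrow> nat" where
  "max_degree V E = (if V = {} then 0 else Max (degree E ` V))"

text \<open>Complete graph on 2n vertices minus a perfect matching: vertices {0..<2n},
  i ~ j iff i, j are distinct and not matched (i div 2 \<noteq> j div 2).\<close>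
definition Kminus_V :: "nat \<Rightarrow> nat set" where
  "Kminus_V m = {0..<m}"

definition Kminus_E :: "nat \<Rightarrow> nat set set" where
  "Kminus_E m = {{i, j} | i j. i < m \<and> j < m \<and> i \<noteq> j \<and> i div 2 \<noteq> j div 2}"

definition loc_inj_hom :: "'a set \<Rightarrow> 'a set set \<Rightarrow> ('a \<Rightarrow> 'b) \<Rightarrow> 'b set \<Rightarrow> 'b set set \<Rightarrow> bool" where
  "loc_inj_hom V E f W F \<longleftrightarrow>
     (\<forall>v\<in>V. f v \<in> W) \<and>
     (\<forall>u\<in>V. \<forall>v\<in>V. {u, v} \<in> E \<longrightarrow> {f u, f v} \<in> F) \<and>
     (\<forall>v\<in>V. inj_on f (neighbors E v))"

definition sub_2_permutable :: "'a set \<Rightarrow> 'a set set \<Rightarrow> bool" where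
  "sub_2_permutable V E \<longleftrightarrow> even (max_degree V E) \<and>
     (\<exists>f :: 'a \<Rightarrow> nat. loc_inj_hom V E f
        (Kminus_V (max_degree V E + 2)) (Kminus_E (max_degree V E + 2)))"

definition incidences :: "'a set set \<Rightarrow> ('a \<times> 'a set) set" where
  "incidences E = {(v, e). e \<in> E \<and> v \<in> e}"

definition inc_adjacent :: "'a \<times> 'a set \<Rightarrow> 'a \<times> 'a set \<Rightarrow> bool" where
  "inc_adjacent a b = (case a of (v, e) \<Rightarrow> case b of (u, f) \<Rightarrow>
      v = u \<or> e = f \<or> {v, u} = e \<or> {v, u} = f)"

definition incidence_coloring :: "'a set set \<Rightarrow> nat \<Rightarrow> ('a \<times> 'a set \<Rightarrow> nat) \<Rightarrow> bool" where
  "incidence_coloring E k c \<longleftrightarrow>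
     (\<forall>a\<in>incidences E. c a < k) \<and>
     (\<forall>a\<in>incidences E. \<forall>b\<in>incidences E. a \<noteq> b \<and> inc_adjacent a b \<longrightarrow> c a \<noteq> c b)"

definition incidence_chromatic :: "'a set set \<Rightarrow> nat" where
  "incidence_chromatic E = (LEAST k. \<exists>c. incidence_coloring E k c)"

definition cart_V :: "'a set \<Rightarrow> 'b set \<Rightarrow> ('a \<times> 'b) set" where
  "cart_V V1 V2 = V1 \<times> V2"

definition cart_E :: "'a set \<Rightarrow> 'a set set \<Rightarrow> 'b set \<Rightarrow> 'b set set \<Rightarrow> ('a \<times> 'b) set set" where
  "cart_E V1 E1 V2 E2 =
     {{(u, w), (u', w)} | u u' w. {u, u'} \<in> E1 \<and> w \<in> V2} \<union>
     {{(u, w), (u, w')} | u w w'. u \<in> V1 \<and> {w, w'} \<in> E2}"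

definition K2_V :: "bool set" where "K2_V = UNIV"
definition K2_E :: "bool set set" where "K2_E = {{False, True}}"

end

theory Submission
  imports Defs
begin

definition other :: "'a \<Rightarrow> 'a set \<Rightarrow> 'a" where
  "other v e = the_elem (e - {v})"

lemma other_eq: "u \<noteq> v \<Longrightarrow> other v {v,u} = u"
  unfolding other_def by (simp add: insert_Diff_if)

lemma edge_other:
  assumes "\<forall>e\<in>E. \<exists>u v. e = {u,v} \<and> u \<noteq> v" "e \<in> E" "v \<in> e"
  shows "\<exists>x. e = {v,x} \<and> x \<noteq> v"
  using assms by (metis empty_iff insert_commute insert_iff)

lemma coloring_from_F:
  assumes edges: "\<forall>e\<in>E. \<exists>u v. e = {u,v} \<and> u \<noteq> v"
  and Fpr: "\<forall>u v. {u,v} \<in> E \<longrightarrow> F u \<noteq> F v"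
  and inj: "\<forall>v. inj_on F (neighbors E v)"
  and bound: "\<forall>e\<in>E. \<forall>x\<in>e. F x < k"
  shows "incidence_coloring E k (\<lambda>(v,e). F (other v e))"
  unfolding incidence_coloring_def
proof (intro conjI ballI impI)
  fix a assume "a \<in> incidences E"
  then obtain v e where a: "a=(v,e)" "e\<in>E" "v\<in>e" by (auto simp: incidences_def)
  then obtain x where x: "e={v,x}" "x\<noteq>v" using edge_other[OF edges] by blast
  show "(case a of (v,e) \<Rightarrow> F (other v e)) < k"
    using a x bound other_eq[OF x(2)] by auto
next
  fix a b assume ai: "a \<in> incidences E" and bi: "b \<in> incidences E"
    and ab: "a \<noteq> b \<and> inc_adjacent a b"
  from ai obtain v e where a: "a=(v,e)" "e\<in>E" "v\<in>e" by (auto simp: incidences_def)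
  then obtain x where x: "e={v,x}" "x\<noteq>v" using edge_other[OF edges] by blast
  from bi obtain u e' where b: "b=(u,e')" "e'\<in>E" "u\<in>e'" by (auto simp: incidences_def)
  then obtain y where y: "e'={u,y}" "y\<noteq>u" using edge_other[OF edges] by blast
  have ca: "(case a of (v,e) \<Rightarrow> F (other v e)) = F x" using a x other_eq[OF x(2)] by auto
  have cb: "(case b of (v,e) \<Rightarrow> F (other v e)) = F y" using b y other_eq[OF y(2)] by auto
  have adj: "v = u \<or> {v,x} = {u,y} \<or> {v,u} = {v,x} \<or> {v,u} = {u,y}"
    using ab a b x y by (simp add: inc_adjacent_def)
  have E1: "{v,x} \<in> E" "{u,y} \<in> E" using a b x y by auto
  show "(case a of (v,e) \<Rightarrow> F (other v e)) \<noteq> (case b of (v,e) \<Rightarrow> F (other v e))"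
    unfolding ca cb
  proof (cases "v = u")
    case True
    then have "x \<noteq> y" using ab a b x y by auto
    moreover have "x \<in> neighbors E v" "y \<in> neighbors E v"
      using E1 True by (auto simp: neighbors_def insert_commute)
    ultimately show "F x \<noteq> F y" using inj by (meson inj_onD)
  next
    case False
    then have "{v,x} = {u,y} \<or> {v,u} = {v,x} \<or> {v,u} = {u,y}" using adj by auto
    then show "F x \<noteq> F y"
    proof (elim disjE)
      assume h: "{v,x} = {u,y}"
      then have "v = y" "x = u" using False by (auto simp: doubleton_eq_iff)
      then show ?thesis using Fpr E1 by metis
    next
      assume h: "{v,u} = {v,x}"
      then have "u = x" using False by (auto simp: doubleton_eq_iff)
      then show ?thesis using Fpr E1 by metis
    next
      assume h: "{v,u} = {u,y}"
      then have "y = v" using False by (auto simp: doubleton_eq_iff)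
      then show ?thesis using Fpr E1 by metis
    qed
  qed
qed

lemma lower_bound:
  assumes fin: "finite E" and edges: "\<forall>e\<in>E. \<exists>u v. e = {u,v} \<and> u \<noteq> v"
  and d: "degree E w \<ge> 1"
  and col: "incidence_coloring E k c"
  shows "degree E w + 1 \<le> k"
proof -
  define S where "S = {e\<in>E. w\<in>e}"
  have cS: "card S = degree E w" by (simp add: S_def degree_def)
  have fS: "finite S" using fin by (simp add: S_def)
  then have "S \<noteq> {}" using d cS by auto
  then obtain e0 where e0: "e0 \<in> S" by blast
  then obtain u where u: "e0 = {w,u}" "u \<noteq> w" using edge_other[OF edges] by (auto simp: S_def)
  define I where "I = (\<lambda>e. (w,e)) ` S"
  have Iinc: "I \<subseteq> incidences E" by (auto simp: I_def S_def incidences_def)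
  have ui: "(u,e0) \<in> incidences E" using e0 u by (auto simp: S_def incidences_def)
  have injc: "inj_on c I"
  proof (rule inj_onI)
    fix a b assume "a \<in> I" "b \<in> I" "c a = c b"
    moreover have "a \<in> incidences E" "b \<in> incidences E" using \<open>a \<in> I\<close> \<open>b \<in> I\<close> Iinc by auto
    moreover have "inc_adjacent a b" using \<open>a \<in> I\<close> \<open>b \<in> I\<close> by (auto simp: I_def inc_adjacent_def)
    ultimately show "a = b" using col unfolding incidence_coloring_def by blast
  qed
  have cI: "card (c ` I) = card S"
    using card_image[OF injc] by (simp add: I_def card_image inj_on_def)
  have notin: "c (u,e0) \<notin> c ` I"
  proof
    assume "c (u,e0) \<in> c ` I"
    then obtain e where e: "e \<in> S" "c (w,e) = c (u,e0)" by (auto simp: I_def)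
    have "(w,e) \<in> incidences E" using e by (auto simp: S_def incidences_def)
    moreover have "inc_adjacent (w,e) (u,e0)" using u by (simp add: inc_adjacent_def)
    moreover have "(w,e) \<noteq> (u,e0)" using u by auto
    ultimately show False using col ui e unfolding incidence_coloring_def by blast
  qed
  have sub: "insert (c (u,e0)) (c ` I) \<subseteq> {..<k}"
    using col Iinc ui unfolding incidence_coloring_def by auto
  have "card (insert (c (u,e0)) (c ` I)) = card S + 1"
    using notin cI fS by (simp add: I_def)
  then show ?thesis using card_mono[OF _ sub] cS by simp
qed


definition partner :: "nat \<Rightarrow> nat" where
  "partner i = (if even i then i+1 else i - 1)"

lemma partner_div: "partner i div 2 = i div 2"
  unfolding partner_def by (cases "even i") (auto elim: evenE oddE)

lemma partner_neq: "partner i \<noteq> i"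
  unfolding partner_def by presburger

lemma partner_inj: "partner i = partner j \<Longrightarrow> i = j"
  unfolding partner_def by (auto split: if_splits) presburger+

lemma partner_lt: "even m \<Longrightarrow> i < m \<Longrightarrow> partner i < m"
  unfolding partner_def by (auto elim!: evenE)

theorem mainTheorem9:
  fixes V :: "'a set" and E :: "'a set set"
  assumes "simple_graph V E" and "V \<noteq> {}" and "sub_2_permutable V E"
  shows "incidence_chromatic (cart_E V E K2_V K2_E) =
           max_degree (cart_V V K2_V) (cart_E V E K2_V K2_E) + 1"
proof -
  define D where "D = max_degree V E"
  define m where "m = D + 2"
  define E' where "E' = cart_E V E K2_V K2_E"
  define V' where "V' = cart_V V K2_V"
  have finV: "finite V" and simpG: "\<forall>e\<in>E. \<exists>u v. e = {u,v} \<and> u \<noteq> v \<and> u \<in> V \<and> v \<in> V"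
    using assms(1) by (auto simp: simple_graph_def)
  obtain f where hom: "loc_inj_hom V E f (Kminus_V m) (Kminus_E m)" and evD: "even D"
    using assms(3) by (auto simp: sub_2_permutable_def D_def m_def)
  have evm: "even m" using evD by (simp add: m_def)
  have fV: "\<And>v. v \<in> V \<Longrightarrow> f v < m" using hom by (auto simp: loc_inj_hom_def Kminus_V_def)
  have EV: "\<And>u v. {u,v} \<in> E \<Longrightarrow> u \<in> V \<and> v \<in> V \<and> u \<noteq> v"
  proof -
    fix u v assume "{u,v} \<in> E"
    then obtain a b where "{u,v} = {a,b}" "a \<noteq> b" "a \<in> V" "b \<in> V" using simpG by blast
    then show "u \<in> V \<and> v \<in> V \<and> u \<noteq> v" by (auto simp: doubleton_eq_iff)
  qed
  have fkey: "\<And>u v. {u,v} \<in> E \<Longrightarrow> f u div 2 \<noteq> f v div 2"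
  proof -
    fix u v assume uv: "{u,v} \<in> E"
    then have "{f u, f v} \<in> Kminus_E m" using hom EV[OF uv] by (auto simp: loc_inj_hom_def)
    then obtain i j where "{f u, f v} = {i,j}" "i div 2 \<noteq> j div 2" by (auto simp: Kminus_E_def)
    then show "f u div 2 \<noteq> f v div 2" by (auto simp: doubleton_eq_iff)
  qed
  have finj: "\<And>v. v \<in> V \<Longrightarrow> inj_on f (neighbors E v)" using hom by (auto simp: loc_inj_hom_def)
  define F where "F = (\<lambda>(u::'a,b::bool). if b then f u else partner (f u))"
  have E'cases: "\<And>e. e \<in> E' \<Longrightarrow> (\<exists>u u' w. e = {(u,w),(u',w)} \<and> {u,u'} \<in> E) \<or>
        (\<exists>u. e = {(u,False),(u,True)} \<and> u \<in> V)"
    by (auto simp: E'_def cart_E_def K2_E_def K2_V_def doubleton_eq_iff)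
  have E'intro1: "\<And>u u' w. {u,u'} \<in> E \<Longrightarrow> {(u,w),(u',w)} \<in> E'"
  proof -
    fix u u' w assume "{u,u'} \<in> E"
    then have "{(u,w),(u',w)} \<in> {{(u, w), (u', w)} | u u' w. {u, u'} \<in> E \<and> w \<in> K2_V}"
      unfolding K2_V_def by (intro CollectI exI[of _ u] exI[of _ u'] exI[of _ w]) simp
    then show "{(u,w),(u',w)} \<in> E'" unfolding E'_def cart_E_def by (rule UnI1)
  qed
  have E'intro2: "\<And>u. u \<in> V \<Longrightarrow> {(u,False),(u,True)} \<in> E'"
  proof -
    fix u assume "u \<in> V"
    then have "{(u,False),(u,True)} \<in> {{(u, w), (u, w')} | u w w'. u \<in> V \<and> {w, w'} \<in> K2_E}"
      unfolding K2_E_def by (intro CollectI exI[of _ u] exI[of _ False] exI[of _ True]) simp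
    then show "{(u,False),(u,True)} \<in> E'" unfolding E'_def cart_E_def by (rule UnI2)
  qed
  have edges': "\<forall>e\<in>E'. \<exists>p q. e = {p,q} \<and> p \<noteq> q"
  proof
    fix e assume "e \<in> E'"
    from E'cases[OF this] show "\<exists>p q. e = {p,q} \<and> p \<noteq> q"
    proof (elim disjE exE conjE)
      fix u u' w assume h: "e = {(u, w), (u', w)}" "{u, u'} \<in> E"
      then have "(u,w) \<noteq> (u',w)" using EV by blast
      then show ?thesis using h(1) by blast
    next
      fix u assume h: "e = {(u, False), (u, True)}" "u \<in> V"
      then show ?thesis by blast
    qed
  qed
  have E'sub: "E' \<subseteq> Pow (V \<times> UNIV)"
  proof
    fix e assume "e \<in> E'"
    from E'cases[OF this] show "e \<in> Pow (V \<times> UNIV)"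
    proof (elim disjE exE conjE)
      fix u u' w assume h: "e = {(u, w), (u', w)}" "{u, u'} \<in> E"
      then have "u \<in> V" "u' \<in> V" using EV by blast+
      then show ?thesis using h(1) by blast
    next
      fix u assume h: "e = {(u, False), (u, True)}" "u \<in> V"
      then show ?thesis by blast
    qed
  qed
  have finE': "finite E'" using finite_subset[OF E'sub] finV by simp
  have nbr: "\<And>y v b. y \<in> neighbors E' (v,b) \<Longrightarrow>
      (\<exists>u. y = (u,b) \<and> {u,v} \<in> E) \<or> (y = (v, \<not> b) \<and> v \<in> V)"
  proof -
    fix y v b assume "y \<in> neighbors E' (v,b)"
    then have "{y,(v,b)} \<in> E'" by (simp add: neighbors_def)
    from E'cases[OF this] show "?thesis y v b"
    proof (elim disjE exE conjE)
      fix u u' w assume h: "{y, (v, b)} = {(u, w), (u', w)}" "{u, u'} \<in> E"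
      then have "u \<noteq> u'" using EV by blast
      then show ?thesis using h by (auto simp: doubleton_eq_iff insert_commute)
    next
      fix u assume h: "{y, (v, b)} = {(u, False), (u, True)}" "u \<in> V"
      then show ?thesis by (auto simp: doubleton_eq_iff)
    qed
  qed
  have Fpr: "\<forall>x y. {x,y} \<in> E' \<longrightarrow> F x \<noteq> F y"
  proof (intro allI impI)
    fix x y assume "{x,y} \<in> E'"
    from E'cases[OF this] show "F x \<noteq> F y"
    proof (elim disjE exE conjE)
      fix u u' w assume h: "{x, y} = {(u, w), (u', w)}" "{u, u'} \<in> E"
      have "f u \<noteq> f u'" using fkey[OF h(2)] by auto
      then have "F (u,w) \<noteq> F (u',w)" using partner_inj by (auto simp: F_def)
      then show ?thesis using h by (auto simp: doubleton_eq_iff)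
    next
      fix u assume h: "{x, y} = {(u, False), (u, True)}" "u \<in> V"
      have "F (u,False) \<noteq> F (u,True)" using partner_neq by (simp add: F_def)
      then show ?thesis using h by (auto simp: doubleton_eq_iff)
    qed
  qed
  have Finj: "\<forall>z. inj_on F (neighbors E' z)"
  proof
    fix z :: "'a \<times> bool"
    obtain v b where z: "z = (v,b)" by fastforce
    show "inj_on F (neighbors E' z)"
    proof (rule inj_onI)
      fix y1 y2 assume y1: "y1 \<in> neighbors E' z" and y2: "y2 \<in> neighbors E' z" and eq: "F y1 = F y2"
      have cross: "\<And>u. {u,v} \<in> E \<Longrightarrow> F (u,b) \<noteq> F (v, \<not> b)"
      proof -
        fix u assume "{u,v} \<in> E"
        then have "f u div 2 \<noteq> f v div 2" by (rule fkey)
        then show "F (u,b) \<noteq> F (v, \<not> b)"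
          by (cases b) (auto simp: F_def partner_div dest: arg_cong[where f="\<lambda>i. i div 2"])
      qed
      from nbr[OF y1[unfolded z]] nbr[OF y2[unfolded z]] show "y1 = y2"
      proof (elim disjE exE conjE)
        fix u1 u2 assume a: "y1 = (u1,b)" "{u1,v} \<in> E" "y2 = (u2,b)" "{u2,v} \<in> E"
        have "f u1 = f u2" using eq a partner_inj by (cases b) (auto simp: F_def)
        moreover have "v \<in> V" using EV a(2) by blast
        moreover have "u1 \<in> neighbors E v" "u2 \<in> neighbors E v" using a by (auto simp: neighbors_def)
        ultimately show ?thesis using finj a by (metis inj_onD)
      next
        fix u1 assume "y1 = (u1,b)" "{u1,v} \<in> E" "y2 = (v, \<not> b)"
        then show ?thesis using eq cross by auto
      next
        fix u2 assume "y2 = (u2,b)" "{u2,v} \<in> E" "y1 = (v, \<not> b)"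
        then show ?thesis using eq cross by metis
      next
        assume "y1 = (v, \<not> b)" "y2 = (v, \<not> b)" then show ?thesis by simp
      qed
    qed
  qed
  have Fbound: "\<forall>e\<in>E'. \<forall>x\<in>e. F x < m"
  proof (intro ballI)
    fix e x assume "e \<in> E'" "x \<in> e"
    then obtain u b where "x = (u,b)" "u \<in> V" using E'sub by blast
    then show "F x < m" using fV partner_lt[OF evm] by (auto simp: F_def)
  qed
  have col: "incidence_coloring E' m (\<lambda>(v,e). F (other v e))"
    by (rule coloring_from_F[OF edges' Fpr Finj Fbound])
  have finV': "finite V'" and neV': "V' \<noteq> {}" using finV assms(2) by (auto simp: V'_def cart_V_def K2_V_def)
  have D': "max_degree V' E' = Max (degree E' ` V')" using neV' by (simp add: max_degree_def)
  obtain w where w: "w \<in> V'" "degree E' w = max_degree V' E'"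
  proof -
    have "Max (degree E' ` V') \<in> degree E' ` V'" using finV' neV' by (intro Max_in) auto
    then show ?thesis using that D' by auto
  qed
  obtain v0 where v0: "v0 \<in> V" "degree E v0 = D"
  proof -
    have "Max (degree E ` V) \<in> degree E ` V" using finV assms(2) by (intro Max_in) auto
    then obtain x where "x \<in> V" "degree E x = Max (degree E ` V)" by (metis imageE)
    then show ?thesis using that assms(2) by (simp add: D_def max_degree_def)
  qed
  have degv0: "degree E' (v0,True) \<ge> D + 1"
  proof -
    define S where "S = {e\<in>E. v0\<in>e}"
    define T where "T = {e\<in>E'. (v0,True)\<in>e}"
    define g where "g = (\<lambda>e::'a set. (\<lambda>x. (x,True)) ` e)"
    have fT: "finite T" using finE' by (simp add: T_def)
    have injg: "inj_on g S" unfolding g_def by (rule inj_onI) auto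
    have gsub: "g ` S \<subseteq> T"
    proof
      fix t assume "t \<in> g ` S"
      then obtain e where e: "e \<in> S" "t = g e" by blast
      then obtain u u' where "e = {u,u'}" "u \<noteq> u'" using simpG by (auto simp: S_def)
      then show "t \<in> T" using e E'intro1[of u u' True] by (auto simp: S_def T_def g_def)
    qed
    have ex: "{(v0,False),(v0,True)} \<in> T" using E'intro2[OF v0(1)] by (simp add: T_def)
    have exn: "{(v0,False),(v0,True)} \<notin> g ` S" by (auto simp: g_def)
    have "card (insert {(v0,False),(v0,True)} (g ` S)) = card S + 1"
      using exn card_image[OF injg] finite_subset[OF gsub fT] by simp
    moreover have "card (insert {(v0,False),(v0,True)} (g ` S)) \<le> card T"
      using card_mono[OF fT] gsub ex by auto
    ultimately show ?thesis using v0 by (simp add: degree_def S_def T_def)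
  qed
  have "degree E' (v0,True) \<le> max_degree V' E'"
    using D' finV' v0(1) by (auto simp: V'_def cart_V_def K2_V_def)
  then have Dle: "D + 1 \<le> max_degree V' E'" using degv0 by simp
  have col2: "incidence_coloring E' (max_degree V' E' + 1) (\<lambda>(v,e). F (other v e))"
    using col Dle unfolding incidence_coloring_def m_def by fastforce
  have lb: "\<And>k c. incidence_coloring E' k c \<Longrightarrow> max_degree V' E' + 1 \<le> k"
  proof -
    fix k c assume "incidence_coloring E' k c"
    moreover have "1 \<le> degree E' w" using w Dle by simp
    ultimately have "degree E' w + 1 \<le> k" by (rule lower_bound[OF finE' edges', rotated])
    then show "max_degree V' E' + 1 \<le> k" using w by simp
  qed
  have "incidence_chromatic E' = max_degree V' E' + 1"
    unfolding incidence_chromatic_def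
    by (rule Least_equality) (use col2 lb in auto)
  then show ?thesis by (simp add: E'_def V'_def)
qed

end
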